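(* Let $A$ be a finite set. Then every irreducible sofic subshift $X \subset A^{\mathbb Z}$ is a W-subshift. In particular, every irreducible subshift of finite type $X\subset A^{\mathbb Z}$ is a W-subshift.
   Context: A subshift of $A^{\mathbb Z}$ is a closed shift-invariant subset. $X$ is of finite type if there are a finite $\Omega\subset\mathbb Z$ and $\mathcal P\subset A^\Omega$ with $X=\{x:(gx)|_\Omega\in\mathcal P\ \forall g\in\mathbb Z\}$, where $(gx)(h)=x(h-g)$. $X$ is sofic if there are a finite set $B$, a subshift of finite type $Y\subset B^{\mathbb Z}$ and a surjective continuous shift-equivariant map $Y\to X$. $L(X)$ is the set of finite words (including the empty word) appearing as $x(i)\cdots x(j)$ in some $x\in X$; $|w|$ is word length. $X$ is irreducible if for all $u,v\in L(X)$ there is $w\in L(X)$ with $uwv\in L(X)$. $X$ is a W-subshift if there is an integer $n_0\ge0$ such that for all $u,v\in L(X)$ there is $c\in L(X)$ with $|c|\le n_0$ and $ucv\in L(X)$. *)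

theory Defs
  imports "HOL-Library.FuncSet"
begin

definition full_shift :: "'a set \<Rightarrow> (int \<Rightarrow> 'a) set" where
  "full_shift A = {x. \<forall>i. x i \<in> A}"

definition shift :: "int \<Rightarrow> (int \<Rightarrow> 'a) \<Rightarrow> (int \<Rightarrow> 'a)" where
  "shift g x = (\<lambda>h. x (h - g))"

definition shift_invariant :: "(int \<Rightarrow> 'a) set \<Rightarrow> bool" where
  "shift_invariant X \<longleftrightarrow> (\<forall>g. \<forall>x\<in>X. shift g x \<in> X)"

text \<open>Closedness in the prodiscrete topology: X contains every configuration
  all of whose finite windows are matched by some element of X.\<close>
definition closed_cfg :: "(int \<Rightarrow> 'a) set \<Rightarrow> bool" where
  "closed_cfg X \<longleftrightarrow>
     (\<forall>x. (\<forall>F. finite F \<longrightarrow> (\<exists>y\<in>X. \<forall>i\<in>F. y i = x i)) \<longrightarrow> x \<in> X)"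

definition subshift :: "'a set \<Rightarrow> (int \<Rightarrow> 'a) set \<Rightarrow> bool" where
  "subshift A X \<longleftrightarrow> X \<subseteq> full_shift A \<and> closed_cfg X \<and> shift_invariant X"

definition is_SFT :: "'a set \<Rightarrow> (int \<Rightarrow> 'a) set \<Rightarrow> bool" where
  "is_SFT A X \<longleftrightarrow> subshift A X \<and>
     (\<exists>\<Omega> P. finite \<Omega> \<and> P \<subseteq> (\<Omega> \<rightarrow>\<^sub>E A) \<and>
        X = {x \<in> full_shift A. \<forall>g. restrict (shift g x) \<Omega> \<in> P})"

text \<open>Continuity of a map between configuration sets (prodiscrete topology, relative to Y).\<close>
definition cont_cfg :: "(int \<Rightarrow> 'b) set \<Rightarrow> ((int \<Rightarrow> 'b) \<Rightarrow> (int \<Rightarrow> 'a)) \<Rightarrow> bool" where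
  "cont_cfg Y \<phi> \<longleftrightarrow> (\<forall>y\<in>Y. \<forall>F. finite F \<longrightarrow>
     (\<exists>G. finite G \<and> (\<forall>z\<in>Y. (\<forall>i\<in>G. z i = y i) \<longrightarrow> (\<forall>i\<in>F. \<phi> z i = \<phi> y i))))"

text \<open>Sofic: factor of an SFT over some finite alphabet B (taken w.l.o.g. as a set of naturals).\<close>
definition sofic :: "'a set \<Rightarrow> (int \<Rightarrow> 'a) set \<Rightarrow> bool" where
  "sofic A X \<longleftrightarrow> subshift A X \<and>
     (\<exists>(B::nat set) Y (\<phi>::(int \<Rightarrow> nat) \<Rightarrow> (int \<Rightarrow> 'a)).
        finite B \<and> is_SFT B Y \<and> \<phi> ` Y = X \<and> cont_cfg Y \<phi> \<and>
        (\<forall>g. \<forall>y\<in>Y. \<phi> (shift g y) = shift g (\<phi> y)))"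

text \<open>Language: finite words x(i)...x(j) occurring in some x \<in> X (including the empty word).\<close>
definition lang :: "(int \<Rightarrow> 'a) set \<Rightarrow> 'a list set" where
  "lang X = {w. \<exists>x\<in>X. \<exists>i. w = map (\<lambda>k. x (i + int k)) [0..<length w]}"

definition irreducible_shift :: "(int \<Rightarrow> 'a) set \<Rightarrow> bool" where
  "irreducible_shift X \<longleftrightarrow> (\<forall>u\<in>lang X. \<forall>v\<in>lang X. \<exists>w\<in>lang X. u @ w @ v \<in> lang X)"

definition W_subshift :: "(int \<Rightarrow> 'a) set \<Rightarrow> bool" where
  "W_subshift X \<longleftrightarrow> (\<exists>n0::nat. \<forall>u\<in>lang X. \<forall>v\<in>lang X.
      \<exists>c\<in>lang X. length c \<le> n0 \<and> u @ c @ v \<in> lang X)"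

end

theory Submission imports Defs "HOL-Library.Infinite_Set"
begin
lemma W_from_finite:
  fixes X :: "(int \<Rightarrow> 'a) set"
  defines "Fo \<equiv> \<lambda>u. {w. u @ w \<in> lang X}"
  defines "Pr \<equiv> \<lambda>v. {w. w @ v \<in> lang X}"
  assumes irr: "irreducible_shift X"
    and fF: "finite (Fo ` lang X)" and fP: "finite (Pr ` lang X)"
  shows "W_subshift X"
proof -
  let ?S = "Fo ` lang X \<times> Pr ` lang X"
  define c where "c = (\<lambda>fp. SOME c. c \<in> lang X \<and> (\<exists>u0 v0. u0 \<in> lang X \<and> v0 \<in> lang X \<and>
       Fo u0 = fst fp \<and> Pr v0 = snd fp \<and> u0 @ c @ v0 \<in> lang X))"
  have cP: "c fp \<in> lang X \<and> (\<exists>u0 v0. u0 \<in> lang X \<and> v0 \<in> lang X \<and>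
       Fo u0 = fst fp \<and> Pr v0 = snd fp \<and> u0 @ c fp @ v0 \<in> lang X)" if "fp \<in> ?S" for fp
  proof -
    from that obtain u0 v0 where u0: "u0 \<in> lang X" "Fo u0 = fst fp" and v0: "v0 \<in> lang X" "Pr v0 = snd fp"
      by auto
    from irr u0 v0 obtain w where "w \<in> lang X" "u0 @ w @ v0 \<in> lang X"
      unfolding irreducible_shift_def by blast
    then have "\<exists>c. c \<in> lang X \<and> (\<exists>u0 v0. u0 \<in> lang X \<and> v0 \<in> lang X \<and>
       Fo u0 = fst fp \<and> Pr v0 = snd fp \<and> u0 @ c @ v0 \<in> lang X)" using u0 v0 by blast
    then show ?thesis unfolding c_def by (rule someI_ex)
  qed
  define n0 where "n0 = Max (insert 0 ((\<lambda>fp. length (c fp)) ` ?S))"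
  show ?thesis unfolding W_subshift_def
  proof (intro exI ballI)
    fix u v assume u: "u \<in> lang X" and v: "v \<in> lang X"
    let ?fp = "(Fo u, Pr v)"
    have inS: "?fp \<in> ?S" using u v by auto
    from cP[OF inS] obtain u0 v0 where cl: "c ?fp \<in> lang X" and
      h: "Fo u0 = Fo u" "Pr v0 = Pr v" "u0 @ c ?fp @ v0 \<in> lang X" by auto
    have "u0 @ c ?fp \<in> Pr v0" using h(3) unfolding Pr_def by simp
    then have "u0 @ c ?fp @ v \<in> lang X" using h(2) unfolding Pr_def by simp
    then have "c ?fp @ v \<in> Fo u0" unfolding Fo_def by simp
    then have "u @ c ?fp @ v \<in> lang X" using h(1) unfolding Fo_def by simp
    moreover have "length (c ?fp) \<le> n0" unfolding n0_def
      using inS fF fP by (intro Max_ge) auto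
    ultimately show "\<exists>c\<in>lang X. length c \<le> n0 \<and> u @ c @ v \<in> lang X" using cl by blast
  qed
qed

lemma finite_int_bound: "finite (F::int set) \<Longrightarrow> \<exists>N::nat. \<forall>i\<in>F. \<bar>i\<bar> \<le> int N"
proof -
  assume f: "finite F"
  define N where "N = nat (Max (insert 0 (abs ` F)))"
  have "\<forall>i\<in>F. \<bar>i\<bar> \<le> int N"
  proof
    fix i assume "i \<in> F"
    then have "\<bar>i\<bar> \<le> Max (insert 0 (abs ` F))" using f by (intro Max_ge) auto
    then show "\<bar>i\<bar> \<le> int N" unfolding N_def by linarith
  qed
  then show ?thesis by blast
qed

primrec Iseq :: "(nat \<Rightarrow> int \<Rightarrow> 'b) \<Rightarrow> nat \<Rightarrow> nat set" where
  "Iseq s 0 = UNIV"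
| "Iseq s (Suc n) = (SOME J. J \<subseteq> Iseq s n \<and> infinite J \<and>
      (\<forall>a\<in>J. \<forall>b\<in>J. s a (int n) = s b (int n) \<and> s a (- int n) = s b (- int n)))"

declare Iseq.simps(2)[simp del]

lemma Iseq_ex:
  assumes fB: "finite B" and sB: "\<And>n i. s n i \<in> B" and inf: "infinite (Iseq s n)"
  shows "\<exists>J. J \<subseteq> Iseq s n \<and> infinite J \<and>
      (\<forall>a\<in>J. \<forall>b\<in>J. s a (int n) = s b (int n) \<and> s a (- int n) = s b (- int n))"
proof -
  let ?f = "\<lambda>a. (s a (int n), s a (- int n))"
  have "?f ` Iseq s n \<subseteq> B \<times> B" using sB by auto
  then have "finite (?f ` Iseq s n)" using fB finite_subset by blast
  from pigeonhole_infinite[OF inf this] obtain a0 where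
    "a0 \<in> Iseq s n" "infinite {a \<in> Iseq s n. ?f a = ?f a0}" by blast
  then show ?thesis by (intro exI[of _ "{a \<in> Iseq s n. ?f a = ?f a0}"]) auto
qed

lemma Iseq_inf:
  assumes fB: "finite B" and sB: "\<And>n i. s n i \<in> B"
  shows "infinite (Iseq s n)"
proof (induction n)
  case 0
  then show ?case by simp
next
  case (Suc n)
  note h = someI_ex[OF Iseq_ex[of B s n, OF fB sB Suc.IH]]
  show ?case unfolding Iseq.simps(2) by (rule conjunct1[OF conjunct2[OF h]])
qed

lemma Iseq_props:
  assumes fB: "finite B" and sB: "\<And>n i. s n i \<in> B"
  shows "infinite (Iseq s n) \<and> Iseq s (Suc n) \<subseteq> Iseq s n \<and>
      (\<forall>a\<in>Iseq s (Suc n). \<forall>b\<in>Iseq s (Suc n). s a (int n) = s b (int n) \<and> s a (- int n) = s b (- int n))"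
proof -
  note h = someI_ex[OF Iseq_ex[of B s n, OF fB sB Iseq_inf[of B s n, OF fB sB]]]
  show ?thesis unfolding Iseq.simps(2)
    apply (intro conjI)
      apply (rule Iseq_inf[of B s n, OF fB sB])
     apply (rule conjunct1[OF h])
    apply (rule conjunct2[OF conjunct2[OF h]])
    done
qed

lemma compact_seq:
  assumes fB: "finite B" and Ysub: "Y \<subseteq> full_shift B" and cl: "closed_cfg Y"
    and sY: "\<And>n. s n \<in> Y"
  shows "\<exists>y\<in>Y. \<forall>N::nat. \<exists>m\<ge>N. \<forall>i. \<bar>i\<bar> \<le> int N \<longrightarrow> s m i = y i"
proof -
  have sB: "\<And>n i. s n i \<in> B" using sY Ysub unfolding full_shift_def by blast
  note P = Iseq_props[of B s, OF fB sB]
  have anti: "Iseq s n' \<subseteq> Iseq s n" if "n \<le> n'" for n n'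
  proof (rule lift_Suc_antimono_le[of "Iseq s", OF _ that])
    fix n show "Iseq s (Suc n) \<subseteq> Iseq s n" using P[of n] by (elim conjE)
  qed
  have agree: "s a i = s b i" if "a \<in> Iseq s n" "b \<in> Iseq s n" "\<bar>i\<bar> < int n" for a b i n
  proof -
    define k where "k = nat \<bar>i\<bar>"
    have "Suc k \<le> n" using that(3) unfolding k_def by linarith
    then have "a \<in> Iseq s (Suc k)" "b \<in> Iseq s (Suc k)" using anti that(1,2) by blast+
    moreover have "i = int k \<or> i = - int k" unfolding k_def by linarith
    moreover have "\<forall>a\<in>Iseq s (Suc k). \<forall>b\<in>Iseq s (Suc k). s a (int k) = s b (int k) \<and> s a (- int k) = s b (- int k)"
      using P[of k] by (elim conjE)
    ultimately show ?thesis by metis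
  qed
  define y where "y = (\<lambda>i. s (SOME a. a \<in> Iseq s (Suc (nat \<bar>i\<bar>))) i)"
  have yagree: "s a i = y i" if "a \<in> Iseq s (Suc N)" "\<bar>i\<bar> \<le> int N" for a i N
  proof -
    have "infinite (Iseq s (Suc (nat \<bar>i\<bar>)))" using P[of "Suc (nat \<bar>i\<bar>)"] by (elim conjE)
    then have ne: "Iseq s (Suc (nat \<bar>i\<bar>)) \<noteq> {}" by (metis finite.emptyI)
    have "Suc (nat \<bar>i\<bar>) \<le> Suc N" using that(2) by linarith
    then have "a \<in> Iseq s (Suc (nat \<bar>i\<bar>))" using anti that(1) by blast
    moreover have "(SOME a. a \<in> Iseq s (Suc (nat \<bar>i\<bar>))) \<in> Iseq s (Suc (nat \<bar>i\<bar>))"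
      using ne by (simp add: some_in_eq)
    moreover have "\<bar>i\<bar> < int (Suc (nat \<bar>i\<bar>))" by simp
    ultimately show ?thesis unfolding y_def by (rule agree)
  qed
  have ex: "\<exists>m\<ge>N. m \<in> Iseq s (Suc N)" for N
    using P[of "Suc N"] unfolding infinite_nat_iff_unbounded_le by blast
  have "y \<in> Y"
  proof -
    have "\<exists>z\<in>Y. \<forall>i\<in>F. z i = y i" if fF: "finite F" for F
    proof -
      obtain N where N: "\<forall>i\<in>F. \<bar>i\<bar> \<le> int N" using finite_int_bound[OF fF] by blast
      obtain m where "m \<in> Iseq s (Suc N)" using ex by blast
      then have "\<forall>i\<in>F. s m i = y i" using N yagree by blast
      then show ?thesis using sY by blast
    qed
    then show "y \<in> Y" using cl unfolding closed_cfg_def by (elim allE[of _ y]) blast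
  qed
  moreover have "\<forall>N::nat. \<exists>m\<ge>N. \<forall>i. \<bar>i\<bar> \<le> int N \<longrightarrow> s m i = y i"
    using ex yagree by blast
  ultimately show ?thesis by blast
qed

lemma unif_cont:
  assumes fB: "finite B" and Ysub: "Y \<subseteq> full_shift B" and cl: "closed_cfg Y"
    and ct: "cont_cfg Y \<phi>"
  shows "\<exists>M::nat. \<forall>y\<in>Y. \<forall>z\<in>Y. (\<forall>i. \<bar>i\<bar> \<le> int M \<longrightarrow> y i = z i) \<longrightarrow> \<phi> y 0 = \<phi> z 0"
proof (rule ccontr)
  assume "\<not> ?thesis"
  then have "\<forall>M. \<exists>y z. y \<in> Y \<and> z \<in> Y \<and> (\<forall>i. \<bar>i\<bar> \<le> int M \<longrightarrow> y i = z i) \<and> \<phi> y 0 \<noteq> \<phi> z 0"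
    by blast
  then obtain s t where st: "\<And>M. s M \<in> Y \<and> t M \<in> Y \<and> (\<forall>i. \<bar>i\<bar> \<le> int M \<longrightarrow> s M i = t M i) \<and> \<phi> (s M) 0 \<noteq> \<phi> (t M) 0"
    by metis
  obtain y where y: "y \<in> Y" "\<And>N. \<exists>m\<ge>N. \<forall>i. \<bar>i\<bar> \<le> int N \<longrightarrow> s m i = y i"
    using compact_seq[OF fB Ysub cl, of s] st by blast
  obtain G where G: "finite G" "\<And>z. z \<in> Y \<Longrightarrow> (\<forall>i\<in>G. z i = y i) \<Longrightarrow> \<phi> z 0 = \<phi> y 0"
    using ct[unfolded cont_cfg_def] y(1) by (metis finite.emptyI finite_insert insertI1)
  obtain N where N: "\<forall>i\<in>G. \<bar>i\<bar> \<le> int N" using finite_int_bound[OF G(1)] by blast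
  obtain m where m: "m \<ge> N" "\<forall>i. \<bar>i\<bar> \<le> int N \<longrightarrow> s m i = y i" using y(2) by blast
  have "\<phi> (s m) 0 = \<phi> y 0" using G(2)[of "s m"] st m N by blast
  moreover have "\<phi> (t m) 0 = \<phi> y 0" using G(2)[of "t m"] st[of m] m N by force
  ultimately show False using st by metis
qed

definition wd :: "(int \<Rightarrow> 'a) \<Rightarrow> int \<Rightarrow> nat \<Rightarrow> 'a list" where
  "wd x i n = map (\<lambda>k. x (i + int k)) [0..<n]"

lemma length_wd[simp]: "length (wd x i n) = n" by (simp add: wd_def)

lemma wd_append: "wd x i (n + m) = wd x i n @ wd x (i + int n) m"
  by (induction m) (auto simp: wd_def algebra_simps)

lemma wd_cong: "(\<And>k. k < n \<Longrightarrow> x (i + int k) = y (i + int k)) \<Longrightarrow> wd x i n = wd y i n"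
  by (simp add: wd_def)

lemma wd_split: "u @ w = wd x i (length u + length w) \<Longrightarrow>
   u = wd x i (length u) \<and> w = wd x (i + int (length u)) (length w)"
  unfolding wd_append by (simp add: append_eq_append_conv)

lemma shift_shift: "shift g (shift h y) = shift (g + h) y"
  by (simp add: shift_def algebra_simps)

locale sft_factor =
  fixes B :: "'b set" and Y :: "(int \<Rightarrow> 'b) set" and \<Omega> :: "int set" and P
    and \<phi> :: "(int \<Rightarrow> 'b) \<Rightarrow> (int \<Rightarrow> 'a)" and M :: nat and D :: nat
  assumes fB: "finite B"
    and Ydef: "Y = {y \<in> full_shift B. \<forall>g. restrict (shift g y) \<Omega> \<in> P}"
    and \<Omega>D: "\<forall>h\<in>\<Omega>. \<bar>h\<bar> \<le> int D"
    and sY: "shift_invariant Y"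
    and eqv: "\<forall>g. \<forall>y\<in>Y. \<phi> (shift g y) = shift g (\<phi> y)"
    and unif: "\<forall>y\<in>Y. \<forall>z\<in>Y. (\<forall>i. \<bar>i\<bar> \<le> int M \<longrightarrow> y i = z i) \<longrightarrow> \<phi> y 0 = \<phi> z 0"
begin

lemma shiftY: "y \<in> Y \<Longrightarrow> shift g y \<in> Y"
  using sY unfolding shift_invariant_def by blast

lemma loc:
  assumes y: "y \<in> Y" and z: "z \<in> Y" and ag: "\<And>i. \<bar>i - k\<bar> \<le> int M \<Longrightarrow> y i = z i"
  shows "\<phi> y k = \<phi> z k"
proof -
  have "\<phi> y k = shift (-k) (\<phi> y) 0" by (simp add: shift_def)
  also have "\<dots> = \<phi> (shift (-k) y) 0" using eqv y by simp
  also have "\<dots> = \<phi> (shift (-k) z) 0"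
  proof -
    have "\<forall>i. \<bar>i\<bar> \<le> int M \<longrightarrow> shift (-k) y i = shift (-k) z i"
      using ag by (auto simp: shift_def)
    then show ?thesis using unif shiftY y z by blast
  qed
  also have "\<dots> = shift (-k) (\<phi> z) 0" using eqv z by simp
  also have "\<dots> = \<phi> z k" by (simp add: shift_def)
  finally show ?thesis .
qed

lemma glue:
  assumes y1: "y1 \<in> Y" and y2: "y2 \<in> Y" and ag: "\<And>i. \<bar>i\<bar> \<le> 2 * int D \<Longrightarrow> y1 i = y2 i"
  shows "(\<lambda>i. if i \<le> 0 then y1 i else y2 i) \<in> Y"
proof -
  let ?z = "\<lambda>i. if i \<le> 0 then y1 i else y2 i"
  have fs: "?z \<in> full_shift B" using y1 y2 unfolding Ydef full_shift_def by auto
  have "restrict (shift g ?z) \<Omega> \<in> P" for g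
  proof (cases "-g - int D > 0")
    case True
    have "restrict (shift g ?z) \<Omega> = restrict (shift g y2) \<Omega>"
    proof (rule restrict_ext)
      fix h assume "h \<in> \<Omega>"
      then have "\<bar>h\<bar> \<le> int D" using \<Omega>D by blast
      then have "\<not> (h - g \<le> 0)" using True by linarith
      then show "shift g ?z h = shift g y2 h" by (simp add: shift_def)
    qed
    then show ?thesis using y2 unfolding Ydef by simp
  next
    case False
    have "restrict (shift g ?z) \<Omega> = restrict (shift g y1) \<Omega>"
    proof (rule restrict_ext)
      fix h assume "h \<in> \<Omega>"
      then have hD: "\<bar>h\<bar> \<le> int D" using \<Omega>D by blast
      show "shift g ?z h = shift g y1 h"
      proof (cases "h - g \<le> 0")
        case True then show ?thesis by (simp add: shift_def)
      next
        case c: False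
        then have "\<bar>h - g\<bar> \<le> 2 * int D" using hD False by linarith
        then show ?thesis using ag c by (simp add: shift_def)
      qed
    qed
    then show ?thesis using y1 unfolding Ydef by simp
  qed
  then show ?thesis using fs unfolding Ydef by blast
qed

lemma lang_char: "w \<in> lang (\<phi> ` Y) \<longleftrightarrow> (\<exists>y\<in>Y. w = wd (\<phi> y) j (length w))"
proof
  assume "w \<in> lang (\<phi> ` Y)"
  then obtain y0 i where y0: "y0 \<in> Y" "w = map (\<lambda>k. \<phi> y0 (i + int k)) [0..<length w]"
    unfolding lang_def by blast
  let ?y = "shift (j - i) y0"
  have "?y \<in> Y" using shiftY y0 by blast
  moreover have "\<phi> ?y = shift (j - i) (\<phi> y0)" using eqv y0 by blast
  then have "wd (\<phi> ?y) j (length w) = w" using y0(2) by (simp add: wd_def shift_def add.commute)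
  ultimately show "\<exists>y\<in>Y. w = wd (\<phi> y) j (length w)" by metis
next
  assume "\<exists>y\<in>Y. w = wd (\<phi> y) j (length w)"
  then show "w \<in> lang (\<phi> ` Y)" unfolding lang_def wd_def by blast
qed

definition K :: nat where "K = M + 2 * D"

definition Ctx :: "'a list \<Rightarrow> (int \<Rightarrow> 'b) set" where
  "Ctx u = {restrict y {- int K..int K} | y. y \<in> Y \<and> u = wd (\<phi> y) (- int (length u)) (length u)}"

definition Ctx2 :: "'a list \<Rightarrow> (int \<Rightarrow> 'b) set" where
  "Ctx2 v = {restrict y {- int K..int K} | y. y \<in> Y \<and> v = wd (\<phi> y) 0 (length v)}"

lemma fol:
  assumes C: "Ctx u = Ctx u'" and w: "u @ w \<in> lang (\<phi> ` Y)"
  shows "u' @ w \<in> lang (\<phi> ` Y)"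
proof -
  let ?n = "length u" and ?n' = "length u'"
  obtain y where y: "y \<in> Y" "u @ w = wd (\<phi> y) (- int ?n) (?n + length w)"
    using lang_char[where j="- int (length u)", THEN iffD1, OF w] by auto
  from wd_split[OF y(2)] have uy: "u = wd (\<phi> y) (- int ?n) ?n" and wy: "w = wd (\<phi> y) 0 (length w)"
    by auto
  have r0: "restrict y {- int K..int K} \<in> Ctx u" unfolding Ctx_def using y(1) uy by blast
  have rc: "restrict y {- int K..int K} \<in> Ctx u'" using r0 C by simp
  obtain y' where y': "y' \<in> Y" "u' = wd (\<phi> y') (- int ?n') ?n'"
    and r: "restrict y' {- int K..int K} = restrict y {- int K..int K}"
  proof -
    from rc obtain y' where "restrict y {- int K..int K} = restrict y' {- int K..int K}"
      "y' \<in> Y" "u' = wd (\<phi> y') (- int ?n') ?n'" unfolding Ctx_def mem_Collect_eq by (elim exE conjE) 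
    then show thesis using that by metis
  qed
  have ag: "y' i = y i" if "\<bar>i\<bar> \<le> int K" for i
  proof -
    have "- int K \<le> i \<and> i \<le> int K" using that by linarith
    then show ?thesis using fun_cong[OF r, of i] by simp
  qed
  let ?z = "\<lambda>i. if i \<le> 0 then y' i else y i"
  have g: "y' i = y i" if "\<bar>i\<bar> \<le> 2 * int D" for i
    by (rule ag) (insert that, unfold K_def, linarith)
  have z: "?z \<in> Y" by (rule glue[OF y'(1) y(1) g])
  have 1: "wd (\<phi> y') (- int ?n') ?n' = wd (\<phi> ?z) (- int ?n') ?n'"
  proof (rule wd_cong)
    fix k assume "k < ?n'"
    show "\<phi> y' (- int ?n' + int k) = \<phi> ?z (- int ?n' + int k)"
    proof (rule loc[OF y'(1) z])
      fix i assume "\<bar>i - (- int ?n' + int k)\<bar> \<le> int M"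
      then have "i \<le> 0 \<or> (\<bar>i\<bar> \<le> int K \<and> \<not> i \<le> 0)" using \<open>k < ?n'\<close> unfolding K_def by linarith
      then show "y' i = ?z i" using ag[of i] by (elim disjE conjE) simp_all
    qed
  qed
  have 2: "wd (\<phi> y) 0 (length w) = wd (\<phi> ?z) 0 (length w)"
  proof (rule wd_cong)
    fix k assume "k < length w"
    show "\<phi> y (0 + int k) = \<phi> ?z (0 + int k)"
    proof (rule loc[OF y(1) z])
      fix i assume "\<bar>i - (0 + int k)\<bar> \<le> int M"
      then have "\<not> i \<le> 0 \<or> (\<bar>i\<bar> \<le> int K \<and> i \<le> 0)" unfolding K_def by linarith
      then show "y i = ?z i" using ag[of i] by (elim disjE conjE) simp_all
    qed
  qed
  have "u' @ w = wd (\<phi> ?z) (- int ?n') (length (u' @ w))"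
    using 1 2 y'(2) wy wd_append[of "\<phi> ?z" "- int ?n'" ?n' "length w"] by simp
  then show ?thesis using z by (intro lang_char[THEN iffD2]) blast
qed

lemma pre:
  assumes C: "Ctx2 v = Ctx2 v'" and w: "w @ v \<in> lang (\<phi> ` Y)"
  shows "w @ v' \<in> lang (\<phi> ` Y)"
proof -
  let ?m = "length w"
  obtain y where y: "y \<in> Y" "w @ v = wd (\<phi> y) (- int ?m) (?m + length v)"
    using lang_char[where j="- int (length w)", THEN iffD1, OF w] by auto
  from wd_split[OF y(2)] have wy: "w = wd (\<phi> y) (- int ?m) ?m" and vy: "v = wd (\<phi> y) 0 (length v)"
    by auto
  have r0: "restrict y {- int K..int K} \<in> Ctx2 v" unfolding Ctx2_def using y(1) vy by blast
  have rc: "restrict y {- int K..int K} \<in> Ctx2 v'" using r0 C by simp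
  obtain y' where y': "y' \<in> Y" "v' = wd (\<phi> y') 0 (length v')"
    and r: "restrict y' {- int K..int K} = restrict y {- int K..int K}"
  proof -
    from rc obtain y' where "restrict y {- int K..int K} = restrict y' {- int K..int K}"
      "y' \<in> Y" "v' = wd (\<phi> y') 0 (length v')" unfolding Ctx2_def mem_Collect_eq by (elim exE conjE) 
    then show thesis using that by metis
  qed
  have ag: "y' i = y i" if "\<bar>i\<bar> \<le> int K" for i
  proof -
    have "- int K \<le> i \<and> i \<le> int K" using that by linarith
    then show ?thesis using fun_cong[OF r, of i] by simp
  qed
  let ?z = "\<lambda>i. if i \<le> 0 then y i else y' i"
  have g: "y i = y' i" if "\<bar>i\<bar> \<le> 2 * int D" for i
    by (rule ag[symmetric]) (insert that, unfold K_def, linarith)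
  have z: "?z \<in> Y" by (rule glue[OF y(1) y'(1) g])
  have 1: "wd (\<phi> y) (- int ?m) ?m = wd (\<phi> ?z) (- int ?m) ?m"
  proof (rule wd_cong)
    fix k assume "k < ?m"
    show "\<phi> y (- int ?m + int k) = \<phi> ?z (- int ?m + int k)"
    proof (rule loc[OF y(1) z])
      fix i assume "\<bar>i - (- int ?m + int k)\<bar> \<le> int M"
      then have "i \<le> 0 \<or> (\<bar>i\<bar> \<le> int K \<and> \<not> i \<le> 0)" using \<open>k < ?m\<close> unfolding K_def by linarith
      then show "y i = ?z i" using ag[of i] by (elim disjE conjE) simp_all
    qed
  qed
  have 2: "wd (\<phi> y') 0 (length v') = wd (\<phi> ?z) 0 (length v')"
  proof (rule wd_cong)
    fix k assume "k < length v'"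
    show "\<phi> y' (0 + int k) = \<phi> ?z (0 + int k)"
    proof (rule loc[OF y'(1) z])
      fix i assume "\<bar>i - (0 + int k)\<bar> \<le> int M"
      then have "\<not> i \<le> 0 \<or> (\<bar>i\<bar> \<le> int K \<and> i \<le> 0)" unfolding K_def by linarith
      then show "y' i = ?z i" using ag[of i] by (elim disjE conjE) simp_all
    qed
  qed
  have "w @ v' = wd (\<phi> ?z) (- int ?m) (length (w @ v'))"
    using 1 2 y'(2) wy wd_append[of "\<phi> ?z" "- int ?m" ?m "length v'"] by simp
  then show ?thesis using z by (intro lang_char[THEN iffD2]) blast
qed

lemma Ctx_sub: "Ctx u \<subseteq> {- int K..int K} \<rightarrow>\<^sub>E B"
proof
  fix x assume "x \<in> Ctx u"
  then obtain y where "y \<in> Y" "x = restrict y {- int K..int K}" unfolding Ctx_def by blast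
  moreover then have "\<forall>i. y i \<in> B" using Ydef unfolding full_shift_def by blast
  ultimately show "x \<in> {- int K..int K} \<rightarrow>\<^sub>E B" by auto
qed

lemma Ctx2_sub: "Ctx2 u \<subseteq> {- int K..int K} \<rightarrow>\<^sub>E B"
proof
  fix x assume "x \<in> Ctx2 u"
  then obtain y where "y \<in> Y" "x = restrict y {- int K..int K}" unfolding Ctx2_def by blast
  moreover then have "\<forall>i. y i \<in> B" using Ydef unfolding full_shift_def by blast
  ultimately show "x \<in> {- int K..int K} \<rightarrow>\<^sub>E B" by auto
qed

lemma finPiE: "finite (Pow ({- int K..int K} \<rightarrow>\<^sub>E B))"
  using fB by (simp add: finite_PiE)

lemma fin_fol: "finite ((\<lambda>u. {w. u @ w \<in> lang (\<phi> ` Y)}) ` lang (\<phi> ` Y))"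
proof -
  let ?F = "\<lambda>u. {w. u @ w \<in> lang (\<phi> ` Y)}"
  let ?G = "\<lambda>c. ?F (SOME u. Ctx u = c)"
  have Fu: "?F u = ?G (Ctx u)" for u
  proof -
    have e: "Ctx (SOME u'. Ctx u' = Ctx u) = Ctx u" by (rule someI_ex) blast
    show ?thesis using fol[OF e] fol[OF e[symmetric]] by auto
  qed
  then have "?F ` lang (\<phi> ` Y) \<subseteq> ?G ` Pow ({- int K..int K} \<rightarrow>\<^sub>E B)"
  proof (intro subsetI)
    fix S assume "S \<in> ?F ` lang (\<phi> ` Y)"
    then obtain u where "S = ?F u" by blast
    then have "S = ?G (Ctx u)" using Fu[of u] by (rule trans)
    moreover have "Ctx u \<in> Pow ({- int K..int K} \<rightarrow>\<^sub>E B)" using Ctx_sub by simp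
    ultimately show "S \<in> ?G ` Pow ({- int K..int K} \<rightarrow>\<^sub>E B)" by (rule image_eqI)
  qed
  then show ?thesis by (rule finite_subset) (rule finite_imageI[OF finPiE])
qed

lemma fin_pre: "finite ((\<lambda>v. {w. w @ v \<in> lang (\<phi> ` Y)}) ` lang (\<phi> ` Y))"
proof -
  let ?F = "\<lambda>v. {w. w @ v \<in> lang (\<phi> ` Y)}"
  let ?G = "\<lambda>c. ?F (SOME u. Ctx2 u = c)"
  have Fu: "?F u = ?G (Ctx2 u)" for u
  proof -
    have e: "Ctx2 (SOME u'. Ctx2 u' = Ctx2 u) = Ctx2 u" by (rule someI_ex) blast
    show ?thesis using pre[OF e] pre[OF e[symmetric]] by auto
  qed
  then have "?F ` lang (\<phi> ` Y) \<subseteq> ?G ` Pow ({- int K..int K} \<rightarrow>\<^sub>E B)"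
  proof (intro subsetI)
    fix S assume "S \<in> ?F ` lang (\<phi> ` Y)"
    then obtain u where "S = ?F u" by blast
    then have "S = ?G (Ctx2 u)" using Fu[of u] by (rule trans)
    moreover have "Ctx2 u \<in> Pow ({- int K..int K} \<rightarrow>\<^sub>E B)" using Ctx2_sub by simp
    ultimately show "S \<in> ?G ` Pow ({- int K..int K} \<rightarrow>\<^sub>E B)" by (rule image_eqI)
  qed
  then show ?thesis by (rule finite_subset) (rule finite_imageI[OF finPiE])
qed

end

theorem proposition4p4:
  fixes A :: "'a set"
  assumes "finite A"
  shows "(\<forall>X. subshift A X \<and> sofic A X \<and> irreducible_shift X \<longrightarrow> W_subshift X) \<and>
         (\<forall>X. subshift A X \<and> is_SFT A X \<and> irreducible_shift X \<longrightarrow> W_subshift X)"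
proof (intro conjI allI impI)
  fix X :: "(int \<Rightarrow> 'a) set"
  assume h: "subshift A X \<and> sofic A X \<and> irreducible_shift X"
  then obtain B :: "nat set" and Y and \<phi> :: "(int \<Rightarrow> nat) \<Rightarrow> (int \<Rightarrow> 'a)" where
    fB: "finite B" and sft: "is_SFT B Y" and im: "\<phi> ` Y = X" and ct: "cont_cfg Y \<phi>"
    and eqv: "\<forall>g. \<forall>y\<in>Y. \<phi> (shift g y) = shift g (\<phi> y)"
    using h unfolding sofic_def by (elim conjE exE) blast
  from sft obtain \<Omega> P where ss: "subshift B Y" and fO: "finite \<Omega>"
    and Ydef: "Y = {x \<in> full_shift B. \<forall>g. restrict (shift g x) \<Omega> \<in> P}"
    unfolding is_SFT_def by (elim conjE exE) blast
  obtain D where D: "\<forall>h\<in>\<Omega>. \<bar>h\<bar> \<le> int D" using finite_int_bound[OF fO] by blast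
  have Ysub: "Y \<subseteq> full_shift B" and cl: "closed_cfg Y" and sY: "shift_invariant Y"
    using ss unfolding subshift_def by auto
  obtain M where M: "\<forall>y\<in>Y. \<forall>z\<in>Y. (\<forall>i. \<bar>i\<bar> \<le> int M \<longrightarrow> y i = z i) \<longrightarrow> \<phi> y 0 = \<phi> z 0"
    using unif_cont[OF fB Ysub cl ct] by blast
  interpret sft_factor B Y \<Omega> P \<phi> M D
    by unfold_locales (fact fB Ydef D sY eqv M)+
  have f1: "finite ((\<lambda>u. {w. u @ w \<in> lang X}) ` lang X)" using fin_fol unfolding im .
  have f2: "finite ((\<lambda>u. {w. w @ u \<in> lang X}) ` lang X)" using fin_pre unfolding im .
  show "W_subshift X"
    by (rule W_from_finite) (use h f1 f2 in auto)
next
  fix X :: "(int \<Rightarrow> 'a) set"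
  assume h: "subshift A X \<and> is_SFT A X \<and> irreducible_shift X"
  then obtain \<Omega> P where ss: "subshift A X" and fO: "finite \<Omega>"
    and Xdef: "X = {x \<in> full_shift A. \<forall>g. restrict (shift g x) \<Omega> \<in> P}"
    using h unfolding is_SFT_def by (elim conjE exE) blast
  obtain D where D: "\<forall>h\<in>\<Omega>. \<bar>h\<bar> \<le> int D" using finite_int_bound[OF fO] by blast
  have sX: "shift_invariant X" using ss unfolding subshift_def by auto
  interpret sft_factor A X \<Omega> P "\<lambda>x. x" 0 D
    apply unfold_locales
         apply (fact assms)
        apply (fact Xdef)
       apply (fact D)
      apply (fact sX)
     apply simp
    apply (intro ballI impI)
    apply (erule allE[of _ 0])
    apply simp
    done
  have e: "(\<lambda>x. x) ` X = X" by simp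
  have f1: "finite ((\<lambda>u. {w. u @ w \<in> lang X}) ` lang X)" using fin_fol unfolding e .
  have f2: "finite ((\<lambda>u. {w. w @ u \<in> lang X}) ` lang X)" using fin_pre unfolding e .
  show "W_subshift X"
    by (rule W_from_finite) (use h f1 f2 in auto)
qed

end
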